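(* Let $A$ be an associative algebra, $M$ an $A$-bimodule, $H:A\otimes A\to M$ a Hochschild $2$-cocycle, and $\{ T_\alpha : M \to A \}_{\alpha \in \Omega}$ an $H$-twisted $\mathcal{O}$-operator family. Then $(M , \{ \ast_{\alpha, \beta} \}_{\alpha, \beta \in \Omega})$ is an $\Omega$-associative algebra, where $u \ast_{\alpha, \beta} v = T_\alpha (u) \cdot v + u \cdot T_\beta (v) + H (T_\alpha (u), T_\beta (v))$ for $u,v\in M$, $\alpha,\beta\in\Omega$.
   Context: $\Omega$ is a semigroup. Hochschild $2$-cocycle: bilinear $H$ with $a \cdot H (b, c) - H ( a \cdot b, c)+ H (a, b \cdot c) - H (a, b) \cdot c =0$ for all $a,b,c\in A$. $H$-twisted $\mathcal{O}$-operator family: linear maps $T_\alpha:M\to A$ with $T_\alpha (u) \cdot T_\beta (v) = T_{\alpha \beta} \big( T_\alpha (u) \cdot v + u \cdot T_\beta (v) + H (T_\alpha (u), T_\beta (v)) \big)$ for all $u,v,\alpha,\beta$. An $\Omega$-associative algebra is a vector space $B$ with bilinear maps $\{\cdot_{\alpha,\beta}\}_{\alpha,\beta\in\Omega}$ such that $(a \cdot_{\alpha , \beta} b) \cdot_{\alpha \beta, \gamma} c = a \cdot_{\alpha, \beta \gamma} (b \cdot_{\beta, \gamma} c)$ for all $a,b,c$, $\alpha,\beta,\gamma$. *)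

theory Defs
  imports Complex_Main
begin

definition bilinear_map ::
  "('k::field \<Rightarrow> 'a::ab_group_add \<Rightarrow> 'a) \<Rightarrow> ('k \<Rightarrow> 'b::ab_group_add \<Rightarrow> 'b) \<Rightarrow>
   ('k \<Rightarrow> 'c::ab_group_add \<Rightarrow> 'c) \<Rightarrow> ('a \<Rightarrow> 'b \<Rightarrow> 'c) \<Rightarrow> bool" where
  "bilinear_map sA sB sC f \<longleftrightarrow>
     (\<forall>x. Vector_Spaces.linear sB sC (f x)) \<and> (\<forall>y. Vector_Spaces.linear sA sC (\<lambda>x. f x y))"

definition assoc_algebra :: "('k::field \<Rightarrow> 'a::ab_group_add \<Rightarrow> 'a) \<Rightarrow> ('a \<Rightarrow> 'a \<Rightarrow> 'a) \<Rightarrow> bool" where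
  "assoc_algebra sA mul \<longleftrightarrow> vector_space sA \<and> bilinear_map sA sA sA mul \<and>
     (\<forall>a b c. mul (mul a b) c = mul a (mul b c))"

definition bimodule ::
  "('k::field \<Rightarrow> 'a::ab_group_add \<Rightarrow> 'a) \<Rightarrow> ('a \<Rightarrow> 'a \<Rightarrow> 'a) \<Rightarrow>
   ('k \<Rightarrow> 'm::ab_group_add \<Rightarrow> 'm) \<Rightarrow> ('a \<Rightarrow> 'm \<Rightarrow> 'm) \<Rightarrow> ('m \<Rightarrow> 'a \<Rightarrow> 'm) \<Rightarrow> bool" where
  "bimodule sA mul sM l r \<longleftrightarrow> vector_space sM \<and>
     bilinear_map sA sM sM l \<and> bilinear_map sM sA sM r \<and>
     (\<forall>a b u. l (mul a b) u = l a (l b u)) \<and>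
     (\<forall>a b u. r (r u a) b = r u (mul a b)) \<and>
     (\<forall>a b u. r (l a u) b = l a (r u b))"

definition hochschild_2_cocycle ::
  "('k::field \<Rightarrow> 'a::ab_group_add \<Rightarrow> 'a) \<Rightarrow> ('a \<Rightarrow> 'a \<Rightarrow> 'a) \<Rightarrow>
   ('k \<Rightarrow> 'm::ab_group_add \<Rightarrow> 'm) \<Rightarrow> ('a \<Rightarrow> 'm \<Rightarrow> 'm) \<Rightarrow> ('m \<Rightarrow> 'a \<Rightarrow> 'm) \<Rightarrow>
   ('a \<Rightarrow> 'a \<Rightarrow> 'm) \<Rightarrow> bool" where
  "hochschild_2_cocycle sA mul sM l r H \<longleftrightarrow> bilinear_map sA sA sM H \<and>
     (\<forall>a b c. l a (H b c) - H (mul a b) c + H a (mul b c) - r (H a b) c = 0)"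

definition twisted_O_operator_family ::
  "('k::field \<Rightarrow> 'a::ab_group_add \<Rightarrow> 'a) \<Rightarrow> ('a \<Rightarrow> 'a \<Rightarrow> 'a) \<Rightarrow>
   ('k \<Rightarrow> 'm::ab_group_add \<Rightarrow> 'm) \<Rightarrow> ('a \<Rightarrow> 'm \<Rightarrow> 'm) \<Rightarrow> ('m \<Rightarrow> 'a \<Rightarrow> 'm) \<Rightarrow>
   ('a \<Rightarrow> 'a \<Rightarrow> 'm) \<Rightarrow> ('o::semigroup_mult \<Rightarrow> 'm \<Rightarrow> 'a) \<Rightarrow> bool" where
  "twisted_O_operator_family sA mul sM l r H T \<longleftrightarrow>
     (\<forall>\<alpha>. Vector_Spaces.linear sM sA (T \<alpha>)) \<and>
     (\<forall>u v \<alpha> \<beta>. mul (T \<alpha> u) (T \<beta> v) =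
         T (\<alpha> * \<beta>) (l (T \<alpha> u) v + r u (T \<beta> v) + H (T \<alpha> u) (T \<beta> v)))"

definition omega_assoc_algebra ::
  "('k::field \<Rightarrow> 'b::ab_group_add \<Rightarrow> 'b) \<Rightarrow> ('o::semigroup_mult \<Rightarrow> 'o \<Rightarrow> 'b \<Rightarrow> 'b \<Rightarrow> 'b) \<Rightarrow> bool" where
  "omega_assoc_algebra sB m \<longleftrightarrow> vector_space sB \<and>
     (\<forall>\<alpha> \<beta>. bilinear_map sB sB sB (m \<alpha> \<beta>)) \<and>
     (\<forall>a b c \<alpha> \<beta> \<gamma>. m (\<alpha> * \<beta>) \<gamma> (m \<alpha> \<beta> a b) c = m \<alpha> (\<beta> * \<gamma>) a (m \<beta> \<gamma> b c))"

end

theory Submission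
  imports Defs
begin

lemma lin3:
  assumes "Vector_Spaces.linear s1 s2 f" "Vector_Spaces.linear s1 s2 g" "Vector_Spaces.linear s1 s2 h"
  shows "Vector_Spaces.linear s1 s2 (\<lambda>x. f x + g x + h x)"
proof -
  have vs: "vector_space s2" using assms(1) unfolding Vector_Spaces.linear_iff by blast
  show ?thesis using assms
    by (simp add: Vector_Spaces.linear_iff vector_space.vector_space_assms(1)[OF vs] algebra_simps)
qed

lemma lincomp:
  assumes "Vector_Spaces.linear s1 s2 f" "Vector_Spaces.linear s2 s3 g"
  shows "Vector_Spaces.linear s1 s3 (\<lambda>x. g (f x))"
  using Vector_Spaces.linear_compose[OF assms] by (simp add: o_def)

theorem proposition4p3:
  fixes sA :: "'k::field \<Rightarrow> 'a::ab_group_add \<Rightarrow> 'a"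
    and mul :: "'a \<Rightarrow> 'a \<Rightarrow> 'a"
    and sM :: "'k \<Rightarrow> 'm::ab_group_add \<Rightarrow> 'm"
    and l :: "'a \<Rightarrow> 'm \<Rightarrow> 'm" and r :: "'m \<Rightarrow> 'a \<Rightarrow> 'm"
    and H :: "'a \<Rightarrow> 'a \<Rightarrow> 'm"
    and T :: "'o::semigroup_mult \<Rightarrow> 'm \<Rightarrow> 'a"
  assumes "assoc_algebra sA mul"
    and "bimodule sA mul sM l r"
    and "hochschild_2_cocycle sA mul sM l r H"
    and "twisted_O_operator_family sA mul sM l r H T"
  shows "omega_assoc_algebra sM
           (\<lambda>\<alpha> \<beta> u v. l (T \<alpha> u) v + r u (T \<beta> v) + H (T \<alpha> u) (T \<beta> v))"
proof -
  note A = assms[unfolded assoc_algebra_def bimodule_def hochschild_2_cocycle_def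
      twisted_O_operator_family_def bilinear_map_def]
  have vs: "vector_space sM" using A by simp
  have Tl: "\<And>\<alpha>. Vector_Spaces.linear sM sA (T \<alpha>)" using A by simp
  have ll: "\<And>a. Vector_Spaces.linear sM sM (l a)" using A by simp
  have ll2: "\<And>u. Vector_Spaces.linear sA sM (\<lambda>a. l a u)" using A by simp
  have rl: "\<And>u. Vector_Spaces.linear sA sM (r u)" using A by simp
  have rl2: "\<And>a. Vector_Spaces.linear sM sM (\<lambda>u. r u a)" using A by simp
  have Hl: "\<And>a. Vector_Spaces.linear sA sM (H a)" using A by simp
  have Hl2: "\<And>b. Vector_Spaces.linear sA sM (\<lambda>a. H a b)" using A by simp
  have bil: "bilinear_map sM sM sM (\<lambda>u v. l (T \<alpha> u) v + r u (T \<beta> v) + H (T \<alpha> u) (T \<beta> v))" for \<alpha> \<beta>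
    unfolding bilinear_map_def
  proof (intro conjI allI)
    fix x
    show "Vector_Spaces.linear sM sM (\<lambda>v. l (T \<alpha> x) v + r x (T \<beta> v) + H (T \<alpha> x) (T \<beta> v))"
      by (rule lin3[OF ll lincomp[OF Tl rl] lincomp[OF Tl Hl]])
  next
    fix y
    show "Vector_Spaces.linear sM sM (\<lambda>x. l (T \<alpha> x) y + r x (T \<beta> y) + H (T \<alpha> x) (T \<beta> y))"
      by (rule lin3[OF lincomp[OF Tl ll2] rl2 lincomp[OF Tl Hl2]])
  qed
  have addl: "\<And>a x y. l a (x + y) = l a x + l a y" using ll by (simp add: Vector_Spaces.linear_iff)
  have addr: "\<And>a x y. r (x + y) a = r x a + r y a" using rl2 by (simp add: Vector_Spaces.linear_iff)
  have TT: "\<And>u v \<alpha> \<beta>. mul (T \<alpha> u) (T \<beta> v) =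
         T (\<alpha> * \<beta>) (l (T \<alpha> u) v + r u (T \<beta> v) + H (T \<alpha> u) (T \<beta> v))" using A by simp
  have lm: "\<And>a b u. l (mul a b) u = l a (l b u)" and rm: "\<And>a b u. r (r u a) b = r u (mul a b)"
    and lr: "\<And>a b u. r (l a u) b = l a (r u b)" using A by blast+
  have coc: "\<And>a b c. l a (H b c) - H (mul a b) c + H a (mul b c) - r (H a b) c = 0" using A by simp
  have ass: "\<And>a b c. mul (mul a b) c = mul a (mul b c)" using A by simp
  show ?thesis unfolding omega_assoc_algebra_def
  proof (intro conjI allI vs bil)
    fix u v w and \<alpha> \<beta> \<gamma> :: 'o
    define a where "a = T \<alpha> u"
    define b where "b = T \<beta> v"
    define c where "c = T \<gamma> w"
    have e1: "T (\<alpha> * \<beta>) (l a v + r u b + H a b) = mul a b" using TT a_def b_def by simp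
    have e2: "T (\<beta> * \<gamma>) (l b w + r v c + H b c) = mul b c" using TT b_def c_def by simp
    have cc: "r (H a b) c + H (mul a b) c = l a (H b c) + H a (mul b c)"
      using coc[of a b c] by (simp add: algebra_simps)
    show "l (T (\<alpha> * \<beta>) (l (T \<alpha> u) v + r u (T \<beta> v) + H (T \<alpha> u) (T \<beta> v))) w +
          r (l (T \<alpha> u) v + r u (T \<beta> v) + H (T \<alpha> u) (T \<beta> v)) (T \<gamma> w) +
          H (T (\<alpha> * \<beta>) (l (T \<alpha> u) v + r u (T \<beta> v) + H (T \<alpha> u) (T \<beta> v))) (T \<gamma> w) =
          l (T \<alpha> u) (l (T \<beta> v) w + r v (T \<gamma> w) + H (T \<beta> v) (T \<gamma> w)) +
          r u (T (\<beta> * \<gamma>) (l (T \<beta> v) w + r v (T \<gamma> w) + H (T \<beta> v) (T \<gamma> w))) +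
          H (T \<alpha> u) (T (\<beta> * \<gamma>) (l (T \<beta> v) w + r v (T \<gamma> w) + H (T \<beta> v) (T \<gamma> w)))"
      unfolding a_def[symmetric] b_def[symmetric] c_def[symmetric] e1 e2
      using cc by (simp add: addl addr lm rm lr algebra_simps)
  qed
qed

end
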